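(* Let $c^0\in\mathcal{C}$ and $s^0\in\mathcal{S}$ be an incompatible pair, $(c^0,s^0)\notin\mathcal{E}$. Then there exist an integer $h$ with $1\le h\le\min\{I,J\}-1$ and types $c^1,\ldots,c^h\in\mathcal{C}$, $s^1,\ldots,s^h\in\mathcal{S}$ with $(c^i,s^i)\in\mathcal{E}$ for $i=1,\ldots,h$, such that the FCFS matching of the customer sequence $(c^0,c^1,\ldots,c^h)$ with the server sequence $(s^0,s^1,\ldots,s^h)$ is perfect.
   Context: Let $\mathcal{C}=\{c_1,\ldots,c_I\}$ (customer types) and $\mathcal{S}=\{s_1,\ldots,s_J\}$ (server types) be finite sets and $G=(\mathcal{C},\mathcal{S},\mathcal{E})$, $\mathcal{E}\subseteq\mathcal{C}\times\mathcal{S}$, a connected bipartite compatibility graph. Given finite ordered sequences of customer types and server types indexed by the same set, the FCFS matching is the unique complete FCFS matching: a set $A$ of index pairs $(m,n)$ with $(c^m,s^n)\in\mathcal{E}$, each index in at most one pair, with no unmatched compatible pair left, and such that for every $(m,n)\in A$ every $l<n$ with $(c^m,s^l)\in\mathcal{E}$ is matched to some $k<m$ and every $k<m$ with $(c^k,s^n)\in\mathcal{E}$ is matched to some $l<n$. It is perfect if every index is matched. *)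

theory Defs
  imports Main
begin

definition bip_adj :: "('c \<times> 's) set \<Rightarrow> (('c + 's) \<times> ('c + 's)) set" where
  "bip_adj E = {(Inl c, Inr s) | c s. (c, s) \<in> E} \<union> {(Inr s, Inl c) | c s. (c, s) \<in> E}"

definition connected_bipartite :: "'c set \<Rightarrow> 's set \<Rightarrow> ('c \<times> 's) set \<Rightarrow> bool" where
  "connected_bipartite C S E \<longleftrightarrow>
     E \<subseteq> C \<times> S \<and>
     (\<forall>u \<in> C <+> S. \<forall>v \<in> C <+> S. (u, v) \<in> (bip_adj E)\<^sup>*)"

text \<open>Complete FCFS matching of the customer sequence cs 0, ..., cs (n-1) with the
  server sequence ss 0, ..., ss (n-1): a set A of index pairs (m,k) (customer m
  matched with server k).\<close>

definition complete_fcfs_matching ::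
  "('c \<times> 's) set \<Rightarrow> nat \<Rightarrow> (nat \<Rightarrow> 'c) \<Rightarrow> (nat \<Rightarrow> 's) \<Rightarrow> (nat \<times> nat) set \<Rightarrow> bool" where
  "complete_fcfs_matching E n cs ss A \<longleftrightarrow>
     A \<subseteq> {..<n} \<times> {..<n} \<and>
     (\<forall>(m, k) \<in> A. (cs m, ss k) \<in> E) \<and>
     (\<forall>m k k'. (m, k) \<in> A \<longrightarrow> (m, k') \<in> A \<longrightarrow> k = k') \<and>
     (\<forall>m m' k. (m, k) \<in> A \<longrightarrow> (m', k) \<in> A \<longrightarrow> m = m') \<and>
     (\<forall>m < n. \<forall>k < n. (cs m, ss k) \<in> E \<longrightarrow> (\<exists>k'. (m, k') \<in> A) \<or> (\<exists>m'. (m', k) \<in> A)) \<and>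
     (\<forall>(m, k) \<in> A.
        (\<forall>l < k. (cs m, ss l) \<in> E \<longrightarrow> (\<exists>i < m. (i, l) \<in> A)) \<and>
        (\<forall>i < m. (cs i, ss k) \<in> E \<longrightarrow> (\<exists>l < k. (i, l) \<in> A)))"

definition perfect_matching :: "nat \<Rightarrow> (nat \<times> nat) set \<Rightarrow> bool" where
  "perfect_matching n A \<longleftrightarrow>
     (\<forall>m < n. \<exists>k. (m, k) \<in> A) \<and> (\<forall>k < n. \<exists>m. (m, k) \<in> A)"

text \<open>"The FCFS matching is perfect": a complete FCFS matching exists, and every
  complete FCFS matching (it is unique) is perfect.\<close>

definition fcfs_perfect :: "('c \<times> 's) set \<Rightarrow> nat \<Rightarrow> (nat \<Rightarrow> 'c) \<Rightarrow> (nat \<Rightarrow> 's) \<Rightarrow> bool" where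
  "fcfs_perfect E n cs ss \<longleftrightarrow>
     (\<exists>A. complete_fcfs_matching E n cs ss A) \<and>
     (\<forall>A. complete_fcfs_matching E n cs ss A \<longrightarrow> perfect_matching n A)"

end

theory Submission
  imports Defs
begin

definition pth :: "('c \<times> 's) set \<Rightarrow> 'c \<Rightarrow> 's \<Rightarrow> nat \<Rightarrow> (nat \<Rightarrow> 'c) \<Rightarrow> (nat \<Rightarrow> 's) \<Rightarrow> bool" where
  "pth E c0 s0 h cs ss \<longleftrightarrow> 1 \<le> h \<and> cs 0 = c0 \<and> ss 0 = s0 \<and> (\<forall>i<h. (cs i, ss (Suc i)) \<in> E)
     \<and> (\<forall>i\<in>{1..h}. (cs i, ss i) \<in> E) \<and> (cs h, ss 0) \<in> E"

definition wlk :: "('c \<times> 's) set \<Rightarrow> 'c \<Rightarrow> nat \<Rightarrow> (nat \<Rightarrow> 'c) \<Rightarrow> (nat \<Rightarrow> 's) \<Rightarrow> bool" where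
  "wlk E c0 h cs ss \<longleftrightarrow> cs 0 = c0 \<and> (\<forall>i<h. (cs i, ss (Suc i)) \<in> E) \<and> (\<forall>i\<in>{1..h}. (cs i, ss i) \<in> E)"

lemma shortA:
  assumes "pth E c0 s0 h cs ss" "Suc m < k" "k \<le> h" "(cs m, ss k) \<in> E"
  shows "pth E c0 s0 (h - (k - Suc m)) (\<lambda>i. if i \<le> m then cs i else cs (i + (k - Suc m)))
           (\<lambda>i. if i \<le> m then ss i else ss (i + (k - Suc m)))"
proof -
  define d where "d = k - Suc m"
  have k: "k = Suc m + d" using assms(2) d_def by simp
  show ?thesis unfolding d_def[symmetric] unfolding pth_def
  proof (intro conjI allI impI ballI)
    show "1 \<le> h - d" using assms k by simp
    show "(if 0 \<le> m then cs 0 else cs (0 + d)) = c0" using assms(1) by (simp add: pth_def)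
    show "(if 0 \<le> m then ss 0 else ss (0 + d)) = s0" using assms(1) by (simp add: pth_def)
  next
    fix i assume i: "i < h - d"
    show "((if i \<le> m then cs i else cs (i + d)), (if Suc i \<le> m then ss (Suc i) else ss (Suc i + d))) \<in> E"
    proof (cases "i < m")
      case True then show ?thesis using assms(1,3) k by (auto simp: pth_def)
    next
      case False
      show ?thesis
      proof (cases "i = m")
        case True then show ?thesis using assms(4) k by simp
      next
        case False
        then have "i > m" using \<open>\<not> i < m\<close> by simp
        then show ?thesis using assms(1) i k by (auto simp: pth_def)
      qed
    qed
  next
    fix i assume i: "i \<in> {1..h - d}"
    show "((if i \<le> m then cs i else cs (i + d)), (if i \<le> m then ss i else ss (i + d))) \<in> E"
      using assms(1,3) i k by (auto simp: pth_def)
  next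
    show "((if h - d \<le> m then cs (h - d) else cs (h - d + d)), (if 0 \<le> m then ss 0 else ss (0 + d))) \<in> E"
      using assms(1,3) k by (auto simp: pth_def)
  qed
qed

lemma shortB:
  assumes "pth E c0 s0 h cs ss" "1 \<le> k" "k < m" "m \<le> h" "(cs m, ss k) \<in> E"
  shows "pth E c0 s0 (h - (m - k)) (\<lambda>i. if i < k then cs i else cs (i + (m - k)))
           (\<lambda>i. if i \<le> k then ss i else ss (i + (m - k)))"
proof -
  define d where "d = m - k"
  have m: "m = k + d" using assms(3) d_def by simp
  show ?thesis unfolding d_def[symmetric] unfolding pth_def
  proof (intro conjI allI impI ballI)
    show "1 \<le> h - d" using assms m by simp
    show "(if 0 < k then cs 0 else cs (0 + d)) = c0" using assms(1,2) by (simp add: pth_def)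
    show "(if 0 \<le> k then ss 0 else ss (0 + d)) = s0" using assms(1) by (simp add: pth_def)
  next
    fix i assume i: "i < h - d"
    show "((if i < k then cs i else cs (i + d)), (if Suc i \<le> k then ss (Suc i) else ss (Suc i + d))) \<in> E"
      using assms(1,4) i m by (auto simp: pth_def)
  next
    fix i assume i: "i \<in> {1..h - d}"
    show "((if i < k then cs i else cs (i + d)), (if i \<le> k then ss i else ss (i + d))) \<in> E"
    proof (cases "i = k")
      case True then show ?thesis using assms(5) m by simp
    next
      case False
      then show ?thesis using assms(1,4) i m by (auto simp: pth_def)
    qed
  next
    show "((if h - d < k then cs (h - d) else cs (h - d + d)), (if 0 \<le> k then ss 0 else ss (0 + d))) \<in> E"
      using assms(1,4) m by (auto simp: pth_def)
  qed
qed

lemma shortC: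
  assumes "pth E c0 s0 h cs ss" "1 \<le> m" "m < h" "(cs m, ss 0) \<in> E"
  shows "pth E c0 s0 m cs ss"
  using assms by (auto simp: pth_def)

lemma nochord:
  assumes p: "pth E c0 s0 h cs ss" and E0: "(c0, s0) \<notin> E"
    and mini: "\<And>h'. h' < h \<Longrightarrow> \<not> (\<exists>cs ss. pth E c0 s0 h' cs ss)"
    and mk: "m \<le> h" "k \<le> h" "(cs m, ss k) \<in> E"
  shows "k = Suc m \<or> (k = m \<and> 1 \<le> m) \<or> (k = 0 \<and> m = h)"
proof (rule ccontr)
  assume nc: "\<not> ?thesis"
  have h1: "1 \<le> h" using p by (simp add: pth_def)
  consider "Suc m < k" | "1 \<le> k \<and> k < m" | "k = 0 \<and> 1 \<le> m \<and> m < h" | "k = 0 \<and> m = 0"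
    using nc mk by linarith
  then show False
  proof cases
    case 1
    have "h - (k - Suc m) < h" using 1 mk by simp
    then show False using mini shortA[OF p 1 mk(2,3)] by blast
  next
    case 2
    have "h - (m - k) < h" using 2 mk by linarith
    then show False using mini shortB[OF p _ _ mk(1,3)] 2 by blast
  next
    case 3
    then show False using mini shortC[OF p] mk(3) by blast
  next
    case 4
    then show False using p E0 mk(3) by (simp add: pth_def)
  qed
qed

lemma reach:
  assumes "(Inl c0, v) \<in> (bip_adj E)\<^sup>*"
  shows "(\<forall>c. v = Inl c \<longrightarrow> (\<exists>h cs ss. wlk E c0 h cs ss \<and> cs h = c)) \<and>
         (\<forall>t. v = Inr t \<longrightarrow> (\<exists>h cs ss. wlk E c0 h cs ss \<and> (cs h, t) \<in> E))"
  using assms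
proof (induction rule: rtrancl_induct)
  case base
  have "wlk E c0 0 (\<lambda>_. c0) (\<lambda>_. undefined)" by (simp add: wlk_def)
  then show ?case by fastforce
next
  case (step u v)
  from step(2) consider c s where "u = Inl c" "v = Inr s" "(c, s) \<in> E"
    | c s where "u = Inr s" "v = Inl c" "(c, s) \<in> E"
    unfolding bip_adj_def by blast
  then show ?case
  proof cases
    case 1
    then show ?thesis using step(3) by auto
  next
    case 2
    then obtain h cs ss where w: "wlk E c0 h cs ss" "(cs h, s) \<in> E" using step(3) by blast
    have "wlk E c0 (Suc h) (cs(Suc h := c)) (ss(Suc h := s))"
      unfolding wlk_def
    proof (intro conjI allI impI ballI)
      show "(cs(Suc h := c)) 0 = c0" using w by (simp add: wlk_def)
    next
      fix i assume "i < Suc h"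
      then show "((cs(Suc h := c)) i, (ss(Suc h := s)) (Suc i)) \<in> E"
        using w by (cases "i = h") (auto simp: wlk_def)
    next
      fix i assume "i \<in> {1..Suc h}"
      then show "((cs(Suc h := c)) i, (ss(Suc h := s)) i) \<in> E"
        using w 2 by (cases "i = Suc h") (auto simp: wlk_def)
    qed
    then show ?thesis using 2 by fastforce
  qed
qed

theorem lemma3p3:
  fixes C :: "'c set" and S :: "'s set" and E :: "('c \<times> 's) set"
    and c0 :: 'c and s0 :: 's
  assumes "finite C" and "finite S"
    and "connected_bipartite C S E"
    and "c0 \<in> C" and "s0 \<in> S" and "(c0, s0) \<notin> E"
  shows "\<exists>h::nat. \<exists>cs :: nat \<Rightarrow> 'c. \<exists>ss :: nat \<Rightarrow> 's.
           1 \<le> h \<and> h \<le> min (card C) (card S) - 1 \<and>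
           cs 0 = c0 \<and> ss 0 = s0 \<and>
           (\<forall>i \<in> {1..h}. cs i \<in> C \<and> ss i \<in> S \<and> (cs i, ss i) \<in> E) \<and>
           fcfs_perfect E (Suc h) cs ss"
proof -
  have EC: "E \<subseteq> C \<times> S" and conn: "(Inl c0, Inr s0) \<in> (bip_adj E)\<^sup>*"
    using assms(3,4,5) unfolding connected_bipartite_def by auto
  obtain h0 cs0 ss0 where w: "wlk E c0 h0 cs0 ss0" "(cs0 h0, s0) \<in> E"
    using reach[OF conn] by blast
  have "h0 \<noteq> 0"
  proof
    assume "h0 = 0" then show False using w assms(6) by (simp add: wlk_def)
  qed
  then have "pth E c0 s0 h0 cs0 (ss0(0 := s0))" using w by (auto simp: wlk_def pth_def)
  then have "\<exists>h. \<exists>cs ss. pth E c0 s0 h cs ss" by blast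
  then obtain h where hex: "\<exists>cs ss. pth E c0 s0 h cs ss" and hmin: "\<And>h'. h' < h \<Longrightarrow> \<not> (\<exists>cs ss. pth E c0 s0 h' cs ss)"
    using exists_least_iff[of "\<lambda>h. \<exists>cs ss. pth E c0 s0 h cs ss"] by blast
  obtain cs ss where p: "pth E c0 s0 h cs ss" using hex by blast
  have NC: "\<And>m k. m \<le> h \<Longrightarrow> k \<le> h \<Longrightarrow> (cs m, ss k) \<in> E \<Longrightarrow> k = Suc m \<or> (k = m \<and> 1 \<le> m) \<or> (k = 0 \<and> m = h)"
    using nochord[OF p assms(6) hmin] by blast
  have h1: "1 \<le> h" and c00: "cs 0 = c0" and s00: "ss 0 = s0"
    and e1: "\<And>i. i < h \<Longrightarrow> (cs i, ss (Suc i)) \<in> E"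
    and e2: "\<And>i. 1 \<le> i \<Longrightarrow> i \<le> h \<Longrightarrow> (cs i, ss i) \<in> E"
    and e3: "(cs h, ss 0) \<in> E" using p by (auto simp: pth_def)
  have injc: "inj_on cs {0..h}"
  proof (rule ccontr)
    assume "\<not> inj_on cs {0..h}"
    then obtain m m' where mm: "m < m'" "m' \<le> h" "cs m = cs m'"
      unfolding inj_on_def by (metis atLeastAtMost_iff linorder_neqE_nat)
    show False
    proof (cases "m' < h")
      case True
      have "(cs m, ss (Suc m')) \<in> E" using e1[OF True] mm by simp
      then show False using NC[of m "Suc m'"] mm True by auto
    next
      case False
      have "(cs m, ss 0) \<in> E" using e3 mm False by simp
      then show False using NC[of m 0] mm False by auto
    qed
  qed
  have injs: "inj_on ss {0..h}"
  proof (rule ccontr)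
    assume "\<not> inj_on ss {0..h}"
    then obtain k k' where kk: "k < k'" "k' \<le> h" "ss k = ss k'"
      unfolding inj_on_def by (metis atLeastAtMost_iff linorder_neqE_nat)
    have "(cs (k' - 1), ss k') \<in> E" using e1[of "k' - 1"] kk by simp
    then have a: "(cs (k' - 1), ss k) \<in> E" using kk by simp
    have "k' - 1 \<le> h" "k \<le> h" using kk by auto
    from NC[OF this a] have kk2: "k = k' - 1" "1 \<le> k" using kk by auto
    have "Suc (k - 1) = k" using kk2 by simp
    then have "(cs (k - 1), ss k) \<in> E" using e1[of "k - 1"] kk kk2 by (metis less_imp_diff_less order_less_le_trans)
    then have "(cs (k - 1), ss k') \<in> E" using kk by simp
    moreover have "k - 1 \<le> h" "k' \<le> h" using kk by auto
    ultimately have "k' = Suc (k - 1) \<or> (k' = k - 1 \<and> 1 \<le> k - 1) \<or> (k' = 0 \<and> k - 1 = h)"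
      using NC by blast
    then show False using kk kk2 by linarith
  qed
  have csC: "cs ` {0..h} \<subseteq> C"
  proof
    fix x assume "x \<in> cs ` {0..h}"
    then obtain i where i: "i \<le> h" "x = cs i" by auto
    show "x \<in> C"
    proof (cases "i = 0")
      case True then show ?thesis using i c00 assms(4) by simp
    next
      case False then show ?thesis using i e2[of i] EC by auto
    qed
  qed
  have ssS: "ss ` {0..h} \<subseteq> S"
  proof
    fix x assume "x \<in> ss ` {0..h}"
    then obtain i where i: "i \<le> h" "x = ss i" by auto
    show "x \<in> S"
    proof (cases "i = 0")
      case True then show ?thesis using i s00 assms(5) by simp
    next
      case False then show ?thesis using i e2[of i] EC by auto
    qed
  qed
  have "Suc h \<le> card C"
    using card_mono[OF assms(1) csC] card_image[OF injc] by simp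
  moreover have "Suc h \<le> card S"
    using card_mono[OF assms(2) ssS] card_image[OF injs] by simp
  ultimately have hb: "h \<le> min (card C) (card S) - 1" by simp
  have mem: "\<forall>i \<in> {1..h}. cs i \<in> C \<and> ss i \<in> S \<and> (cs i, ss i) \<in> E"
    using e2 EC by (meson SigmaD1 SigmaD2 atLeastAtMost_iff subsetD)
  define A0 where "A0 = {(i, Suc i) | i. i < h} \<union> {(h, 0)}"
  have cA0: "complete_fcfs_matching E (Suc h) cs ss A0"
    unfolding complete_fcfs_matching_def
  proof (intro conjI)
    show "A0 \<subseteq> {..<Suc h} \<times> {..<Suc h}" unfolding A0_def by auto
    show "\<forall>(m, k)\<in>A0. (cs m, ss k) \<in> E" unfolding A0_def using e1 e3 by auto
    show "\<forall>m k k'. (m, k) \<in> A0 \<longrightarrow> (m, k') \<in> A0 \<longrightarrow> k = k'" unfolding A0_def by auto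
    show "\<forall>m m' k. (m, k) \<in> A0 \<longrightarrow> (m', k) \<in> A0 \<longrightarrow> m = m'" unfolding A0_def by auto
    show "\<forall>m<Suc h. \<forall>k<Suc h. (cs m, ss k) \<in> E \<longrightarrow> (\<exists>k'. (m, k') \<in> A0) \<or> (\<exists>m'. (m', k) \<in> A0)"
    proof (intro allI impI)
      fix m k assume "m < Suc h"
      then have "(\<exists>k'. (m, k') \<in> A0)" unfolding A0_def by (cases "m = h") auto
      then show "(\<exists>k'. (m, k') \<in> A0) \<or> (\<exists>m'. (m', k) \<in> A0)" by blast
    qed
    show "\<forall>(m, k)\<in>A0. (\<forall>l<k. (cs m, ss l) \<in> E \<longrightarrow> (\<exists>i<m. (i, l) \<in> A0)) \<and>
        (\<forall>i<m. (cs i, ss k) \<in> E \<longrightarrow> (\<exists>l<k. (i, l) \<in> A0))"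
    proof (intro ballI)
      fix x assume "x \<in> A0"
      then consider m where "x = (m, Suc m)" "m < h" | "x = (h, 0)" unfolding A0_def by auto
      then show "case x of (m, k) \<Rightarrow> (\<forall>l<k. (cs m, ss l) \<in> E \<longrightarrow> (\<exists>i<m. (i, l) \<in> A0)) \<and>
        (\<forall>i<m. (cs i, ss k) \<in> E \<longrightarrow> (\<exists>l<k. (i, l) \<in> A0))"
      proof cases
        case (1 m)
        have a: "\<forall>l<Suc m. (cs m, ss l) \<in> E \<longrightarrow> (\<exists>i<m. (i, l) \<in> A0)"
        proof (intro allI impI)
          fix l assume l: "l < Suc m" "(cs m, ss l) \<in> E"
          then have "l = m" "1 \<le> m" using NC[of m l] 1 by auto
          then show "\<exists>i<m. (i, l) \<in> A0" unfolding A0_def using 1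
            by (intro exI[of _ "m - 1"]) auto
        qed
        have b: "\<forall>i<m. (cs i, ss (Suc m)) \<in> E \<longrightarrow> (\<exists>l<Suc m. (i, l) \<in> A0)"
        proof (intro allI impI)
          fix i assume i: "i < m" "(cs i, ss (Suc m)) \<in> E"
          have "i \<le> h" "Suc m \<le> h" using i 1 by auto
          from NC[OF this i(2)] i show "\<exists>l<Suc m. (i, l) \<in> A0" by auto
        qed
        show ?thesis using a b 1 by simp
      next
        case 2
        have "\<forall>i<h. (cs i, ss 0) \<notin> E"
        proof (intro allI impI notI)
          fix i assume i: "i < h" "(cs i, ss 0) \<in> E"
          have "i \<le> h" "0 \<le> h" using i by auto
          from NC[OF this i(2)] i show False by auto
        qed
        then show ?thesis using 2 by simp
      qed
    qed
  qed
  have perf: "\<forall>A. complete_fcfs_matching E (Suc h) cs ss A \<longrightarrow> perfect_matching (Suc h) A"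
  proof (intro allI impI)
    fix A assume cA: "complete_fcfs_matching E (Suc h) cs ss A"
    have Asub: "\<And>m k. (m, k) \<in> A \<Longrightarrow> m \<le> h \<and> k \<le> h \<and> (cs m, ss k) \<in> E"
      using cA unfolding complete_fcfs_matching_def by auto
    have inj1: "\<And>m k k'. (m, k) \<in> A \<Longrightarrow> (m, k') \<in> A \<Longrightarrow> k = k'"
      and inj2: "\<And>m m' k. (m, k) \<in> A \<Longrightarrow> (m', k) \<in> A \<Longrightarrow> m = m'"
      and compl: "\<And>m k. m < Suc h \<Longrightarrow> k < Suc h \<Longrightarrow> (cs m, ss k) \<in> E \<Longrightarrow> (\<exists>k'. (m, k') \<in> A) \<or> (\<exists>m'. (m', k) \<in> A)"
      and fc2: "\<And>m k i. (m, k) \<in> A \<Longrightarrow> i < m \<Longrightarrow> (cs i, ss k) \<in> E \<Longrightarrow> (\<exists>l < k. (i, l) \<in> A)"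
      using cA unfolding complete_fcfs_matching_def by blast+
    have chain: "\<And>i. i < h \<Longrightarrow> (i, Suc i) \<in> A"
    proof -
      fix i show "i < h \<Longrightarrow> (i, Suc i) \<in> A"
      proof (induction i)
        case 0
        have "(\<exists>k'. (0, k') \<in> A) \<or> (\<exists>m'. (m', Suc 0) \<in> A)"
          using compl[of 0 "Suc 0"] e1[of 0] 0 by simp
        then show ?case
        proof
          assume "\<exists>k'. (0, k') \<in> A"
          then obtain k' where k': "(0, k') \<in> A" by blast
          then have "k' = Suc 0" using NC[of 0 k'] Asub[OF k'] 0 by auto
          then show ?thesis using k' by simp
        next
          assume "\<exists>m'. (m', Suc 0) \<in> A"
          then obtain m' where m': "(m', Suc 0) \<in> A" by blast
          have "m' = 0 \<or> m' = Suc 0" using NC[of m' "Suc 0"] Asub[OF m'] by auto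
          moreover have "m' \<noteq> Suc 0"
          proof
            assume "m' = Suc 0"
            then obtain l where "l < Suc 0" "(0, l) \<in> A" using fc2[OF m', of 0] e1[of 0] 0 by auto
            then show False using Asub[of 0 l] NC[of 0 0] h1 by auto
          qed
          ultimately show ?thesis using m' by simp
        qed
      next
        case (Suc i)
        have IH: "(i, Suc i) \<in> A" using Suc by simp
        have noii: "(Suc i, Suc i) \<notin> A" using inj2[OF IH] by (metis n_not_Suc_n)
        have "(\<exists>k'. (Suc i, k') \<in> A) \<or> (\<exists>m'. (m', Suc (Suc i)) \<in> A)"
          using compl[of "Suc i" "Suc (Suc i)"] e1[of "Suc i"] Suc(2) by simp
        then show ?case
        proof
          assume "\<exists>k'. (Suc i, k') \<in> A"
          then obtain k' where k': "(Suc i, k') \<in> A" by blast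
          have "k' = Suc (Suc i)" using NC[of "Suc i" k'] Asub[OF k'] Suc(2) noii k' by auto
          then show ?thesis using k' by simp
        next
          assume "\<exists>m'. (m', Suc (Suc i)) \<in> A"
          then obtain m' where m': "(m', Suc (Suc i)) \<in> A" by blast
          have "m' = Suc i \<or> m' = Suc (Suc i)" using NC[of m' "Suc (Suc i)"] Asub[OF m'] by auto
          moreover have "m' \<noteq> Suc (Suc i)"
          proof
            assume "m' = Suc (Suc i)"
            then obtain l where l: "l < Suc (Suc i)" "(Suc i, l) \<in> A"
              using fc2[OF m', of "Suc i"] e1[of "Suc i"] Suc(2) by auto
            then have "l = Suc i" using NC[of "Suc i" l] Asub[OF l(2)] Suc(2) by auto
            then show False using l noii by simp
          qed
          ultimately show ?thesis using m' by simp
        qed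
      qed
    qed
    have last: "(h, 0) \<in> A"
    proof -
      have IH: "(h - 1, h) \<in> A" using chain[of "h - 1"] h1 by simp
      have nohh: "(h, h) \<notin> A" using inj2[OF IH] h1 by fastforce
      have "(\<exists>k'. (h, k') \<in> A) \<or> (\<exists>m'. (m', 0) \<in> A)" using compl[of h 0] e3 by simp
      then show ?thesis
      proof
        assume "\<exists>k'. (h, k') \<in> A"
        then obtain k' where k': "(h, k') \<in> A" by blast
        have "k' = 0" using NC[of h k'] Asub[OF k'] nohh k' by auto
        then show ?thesis using k' by simp
      next
        assume "\<exists>m'. (m', 0) \<in> A"
        then obtain m' where m': "(m', 0) \<in> A" by blast
        have "m' = h" using NC[of m' 0] Asub[OF m'] by auto
        then show ?thesis using m' by simp
      qed
    qed
    show "perfect_matching (Suc h) A" unfolding perfect_matching_def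
    proof (intro conjI allI impI)
      fix m assume "m < Suc h"
      then show "\<exists>k. (m, k) \<in> A"
      proof (cases "m = h")
        case False then have "m < h" using \<open>m < Suc h\<close> by simp
        then show ?thesis using chain by blast
      qed (use last in blast)
    next
      fix k assume k: "k < Suc h"
      show "\<exists>m. (m, k) \<in> A"
      proof (cases k)
        case 0 then show ?thesis using last by blast
      next
        case (Suc j) then show ?thesis using chain[of j] k by auto
      qed
    qed
  qed
  have "fcfs_perfect E (Suc h) cs ss" unfolding fcfs_perfect_def using cA0 perf by blast
  then show ?thesis using h1 hb c00 s00 mem by blast
qed

end
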